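(* Let $(V,c)$ be a network and $\Omega\subset V$ a finite subset of size $n$. Let $(\lambda_i,u_i)_{i=1}^n$ be a Dirichlet system for $\Omega$. Then for any $k<n$ and any function $\alpha:V\to\mathbb{R}$, $$\sum_{i=1}^k(\lambda_{k+1}-\lambda_i)^2\Big(\langle\Gamma(\alpha),u_i^2\rangle-\Lambda(\alpha,u_i)\Big)\le\sum_{i=1}^k(\lambda_{k+1}-\lambda_i)\,\big\|u_i\cdot\Delta\alpha-2\Gamma(\alpha,u_i)\big\|^2.$$
   Context: A network is a pair $(V,c)$ with $V$ countable and $c:V\times V\to[0,\infty)$ symmetric with $\pi(x):=\sum_y c(x,y)<\infty$. Set $P(x,y)=c(x,y)/\pi(x)$, $\Delta f(x)=\sum_yP(x,y)(f(x)-f(y))$, $\langle f,g\rangle=\sum_x\pi(x)f(x)\overline{g(x)}$ and $\|f\|^2=\langle f,f\rangle$. Define $2\Gamma(f,g)(x)=\sum_yP(x,y)(f(x)-f(y))\overline{(g(x)-g(y))}$, $\Gamma(f)=\Gamma(f,f)$, and $\Lambda(f,g)=\frac14\sum_{x,y}c(x,y)|f(x)-f(y)|^2|g(x)-g(y)|^2$. For finite $\Omega\subset V$ with $|\Omega|=n$, let $L^2(\Omega)$ be the functions vanishing outside $\Omega$ and $\Delta_\Omega f=\mathbf 1_\Omega\cdot\Delta f$ the Dirichlet Laplacian on $L^2(\Omega)$. A Dirichlet system for $\Omega$ is a collection $(\lambda_i,u_i)_{i=1}^n$ with $\lambda_1\le\cdots\le\lambda_n$ the eigenvalues of $\Delta_\Omega$,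 $u_i$ real-valued, vanishing outside $\Omega$, $\Delta_\Omega u_i=\lambda_iu_i$, and $\langle u_i,u_j\rangle=\mathbf 1_{i=j}$. *)

theory Defs
  imports "HOL-Analysis.Analysis"
begin

definition network :: "('v::countable \<Rightarrow> 'v \<Rightarrow> real) \<Rightarrow> bool" where
  "network c \<longleftrightarrow> (\<forall>x y. 0 \<le> c x y) \<and> (\<forall>x y. c x y = c y x) \<and> (\<forall>x. c x summable_on UNIV)"

definition pi_w :: "('v::countable \<Rightarrow> 'v \<Rightarrow> real) \<Rightarrow> 'v \<Rightarrow> real" where
  "pi_w c x = (\<Sum>\<^sub>\<infinity>y. c x y)"

definition Ptr :: "('v::countable \<Rightarrow> 'v \<Rightarrow> real) \<Rightarrow> 'v \<Rightarrow> 'v \<Rightarrow> real" where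
  "Ptr c x y = c x y / pi_w c x"

definition lap :: "('v::countable \<Rightarrow> 'v \<Rightarrow> real) \<Rightarrow> ('v \<Rightarrow> real) \<Rightarrow> 'v \<Rightarrow> real" where
  "lap c f x = (\<Sum>\<^sub>\<infinity>y. Ptr c x y * (f x - f y))"

definition inner_pi :: "('v::countable \<Rightarrow> 'v \<Rightarrow> real) \<Rightarrow> ('v \<Rightarrow> real) \<Rightarrow> ('v \<Rightarrow> real) \<Rightarrow> real" where
  "inner_pi c f g = (\<Sum>\<^sub>\<infinity>x. pi_w c x * f x * g x)"

definition norm_pi_sq :: "('v::countable \<Rightarrow> 'v \<Rightarrow> real) \<Rightarrow> ('v \<Rightarrow> real) \<Rightarrow> real" where
  "norm_pi_sq c f = inner_pi c f f"

definition Gamma2 :: "('v::countable \<Rightarrow> 'v \<Rightarrow> real) \<Rightarrow> ('v \<Rightarrow> real) \<Rightarrow> ('v \<Rightarrow> real) \<Rightarrow> 'v \<Rightarrow> real" where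
  "Gamma2 c f g x = (1/2) * (\<Sum>\<^sub>\<infinity>y. Ptr c x y * (f x - f y) * (g x - g y))"

definition Lambda :: "('v::countable \<Rightarrow> 'v \<Rightarrow> real) \<Rightarrow> ('v \<Rightarrow> real) \<Rightarrow> ('v \<Rightarrow> real) \<Rightarrow> real" where
  "Lambda c f g = (1/4) * (\<Sum>\<^sub>\<infinity>(x,y). c x y * \<bar>f x - f y\<bar>^2 * \<bar>g x - g y\<bar>^2)"

definition dir_lap :: "('v::countable \<Rightarrow> 'v \<Rightarrow> real) \<Rightarrow> 'v set \<Rightarrow> ('v \<Rightarrow> real) \<Rightarrow> 'v \<Rightarrow> real" where
  "dir_lap c \<Omega> f x = (if x \<in> \<Omega> then lap c f x else 0)"

text \<open>Dirichlet system for \<Omega> (n = card \<Omega>), indexed by 1..n: nondecreasing eigenvalues,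
  real eigenfunctions vanishing outside \<Omega>, orthonormal in the pi-weighted inner product.
  n orthonormal eigenfunctions in the n-dimensional space L^2(\<Omega>) form an eigenbasis, so
  lam 1 \<le> ... \<le> lam n are exactly the eigenvalues of the Dirichlet Laplacian with multiplicity.\<close>
definition dirichlet_system ::
  "('v::countable \<Rightarrow> 'v \<Rightarrow> real) \<Rightarrow> 'v set \<Rightarrow> (nat \<Rightarrow> real) \<Rightarrow> (nat \<Rightarrow> 'v \<Rightarrow> real) \<Rightarrow> bool" where
  "dirichlet_system c \<Omega> lam u \<longleftrightarrow>
     (\<forall>i j. 1 \<le> i \<longrightarrow> i \<le> j \<longrightarrow> j \<le> card \<Omega> \<longrightarrow> lam i \<le> lam j) \<and>
     (\<forall>i\<in>{1..card \<Omega>}. (\<forall>x. x \<notin> \<Omega> \<longrightarrow> u i x = 0) \<and>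
                        dir_lap c \<Omega> (u i) = (\<lambda>x. lam i * u i x)) \<and>
     (\<forall>i\<in>{1..card \<Omega>}. \<forall>j\<in>{1..card \<Omega>}. inner_pi c (u i) (u j) = (if i = j then 1 else 0))"

end

theory Submission imports Defs "Jordan_Normal_Form.Determinant" begin

lemma net_nonneg: "network c \<Longrightarrow> 0 \<le> c x y" by (simp add: network_def)
lemma net_sym: "network c \<Longrightarrow> c x y = c y x" by (simp add: network_def)
lemma net_summ: "network c \<Longrightarrow> c x summable_on UNIV" by (simp add: network_def)

lemma c_le_pi: assumes "network c" shows "c x y \<le> pi_w c x"
proof -
  have "sum (c x) {y} \<le> infsum (c x) UNIV"
    by (rule finite_sum_le_infsum) (auto simp: net_summ[OF assms] net_nonneg[OF assms])
  then show ?thesis by (simp add: pi_w_def)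
qed

lemma pi_nonneg: assumes "network c" shows "0 \<le> pi_w c x"
  unfolding pi_w_def by (rule infsum_nonneg) (simp add: net_nonneg[OF assms])

lemma pi_Ptr: assumes "network c" shows "pi_w c x * Ptr c x y = c x y"
proof (cases "pi_w c x = 0")
  case True
  then have "c x y = 0" using c_le_pi[OF assms, of x y] net_nonneg[OF assms, of x y] by simp
  then show ?thesis using True by (simp add: Ptr_def)
qed (simp add: Ptr_def)

lemma infsum_supp: "finite A \<Longrightarrow> (\<And>x. x \<notin> A \<Longrightarrow> f x = 0) \<Longrightarrow> infsum f UNIV = sum f A"
  by (subst infsum_cong_neutral[where T=A and g=f]) auto

lemma summable_supp: "finite A \<Longrightarrow> (\<And>x. x \<notin> A \<Longrightarrow> f x = 0) \<Longrightarrow> f summable_on UNIV"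
  by (subst summable_on_cong_neutral[where T=A and g=f]) auto

lemma summable_fin_sum:
  fixes f :: "'a \<Rightarrow> 'b \<Rightarrow> real"
  shows "finite A \<Longrightarrow> (\<And>a. a\<in>A \<Longrightarrow> f a summable_on S) \<Longrightarrow> (\<lambda>x. \<Sum>a\<in>A. f a x) summable_on S"
  by (induction A rule: finite_induct) (auto intro: summable_on_add)

lemma infsum_diff':
  fixes f g :: "'a \<Rightarrow> real"
  assumes "f summable_on S" "g summable_on S"
  shows "infsum (\<lambda>x. f x - g x) S = infsum f S - infsum g S"
proof -
  have "infsum (\<lambda>x. f x + (- g x)) S = infsum f S + infsum (\<lambda>x. - g x) S"
    by (rule infsum_add) (use assms in \<open>auto simp: summable_on_uminus\<close>)
  then show ?thesis by (simp add: infsum_uminus)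
qed

lemma summable_diff':
  fixes f g :: "'a \<Rightarrow> real"
  assumes "f summable_on S" "g summable_on S"
  shows "(\<lambda>x. f x - g x) summable_on S"
proof -
  have "(\<lambda>x. f x + (- g x)) summable_on S"
    by (rule summable_on_add) (use assms in \<open>auto simp: summable_on_uminus\<close>)
  then show ?thesis by simp
qed


lemma lap_fin:
  assumes c: "network c" and A: "finite A" and f: "\<And>y. y \<notin> A \<Longrightarrow> f y = 0"
  shows "pi_w c x * lap c f x = pi_w c x * f x - (\<Sum>y\<in>A. c x y * f y)"
proof -
  have "pi_w c x * lap c f x = infsum (\<lambda>y. pi_w c x * (Ptr c x y * (f x - f y))) UNIV"
    unfolding lap_def by (rule infsum_cmult_right'[symmetric])
  also have "\<dots> = infsum (\<lambda>y. c x y * f x - c x y * f y) UNIV"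
    by (rule infsum_cong) (metis mult.assoc pi_Ptr[OF c] right_diff_distrib)
  also have "\<dots> = infsum (\<lambda>y. c x y * f x) UNIV - infsum (\<lambda>y. c x y * f y) UNIV"
  proof (rule infsum_diff')
    show "(\<lambda>y. c x y * f x) summable_on UNIV" by (rule summable_on_cmult_left) (rule net_summ[OF c])
    show "(\<lambda>y. c x y * f y) summable_on UNIV" by (rule summable_supp[OF A]) (simp add: f)
  qed
  also have "infsum (\<lambda>y. c x y * f x) UNIV = pi_w c x * f x"
    unfolding pi_w_def by (rule infsum_cmult_left')
  also have "infsum (\<lambda>y. c x y * f y) UNIV = (\<Sum>y\<in>A. c x y * f y)"
    by (rule infsum_supp[OF A]) (simp add: f)
  finally show ?thesis .
qed

lemma summ_lin:
  assumes c: "network c" and s: "(\<lambda>y. c x y * (\<alpha> x - \<alpha> y)^2) summable_on UNIV"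
  shows "(\<lambda>y. c x y * (\<alpha> x - \<alpha> y)) summable_on UNIV"
proof -
  have g: "(\<lambda>y. c x y + c x y * (\<alpha> x - \<alpha> y)^2) summable_on UNIV"
    by (rule summable_on_add[OF net_summ[OF c] s])
  have "(\<lambda>y. norm (c x y * (\<alpha> x - \<alpha> y))) summable_on UNIV"
  proof (rule Infinite_Sum.abs_summable_on_comparison_test'[OF g])
    fix y
    have t: "\<bar>\<alpha> x - \<alpha> y\<bar> \<le> 1 + (\<alpha> x - \<alpha> y)^2"
    proof (cases "\<bar>\<alpha> x - \<alpha> y\<bar> \<le> 1")
      case True then show ?thesis by (smt (verit) zero_le_power2)
    next
      case False
      then have "\<bar>\<alpha> x - \<alpha> y\<bar> * 1 \<le> \<bar>\<alpha> x - \<alpha> y\<bar> * \<bar>\<alpha> x - \<alpha> y\<bar>"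
        by (intro mult_left_mono) auto
      then show ?thesis by (simp add: power2_eq_square)
    qed
    have "norm (c x y * (\<alpha> x - \<alpha> y)) = c x y * \<bar>\<alpha> x - \<alpha> y\<bar>"
      using net_nonneg[OF c, of x y] by (simp add: abs_mult)
    also have "\<dots> \<le> c x y * (1 + (\<alpha> x - \<alpha> y)^2)"
      by (rule mult_left_mono[OF t net_nonneg[OF c]])
    finally show "norm (c x y * (\<alpha> x - \<alpha> y)) \<le> c x y + c x y * (\<alpha> x - \<alpha> y)^2"
      by (simp add: algebra_simps)
  qed
  then show ?thesis using summable_on_iff_abs_summable_on_real by blast
qed

lemma w_fin:
  assumes c: "network c" and A: "finite A" and u: "\<And>y. y \<notin> A \<Longrightarrow> u y = 0"
    and s: "u x \<noteq> 0 \<Longrightarrow> (\<lambda>y. c x y * (\<alpha> x - \<alpha> y)) summable_on UNIV"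
  shows "pi_w c x * (u x * lap c \<alpha> x - 2 * Gamma2 c \<alpha> u x) = (\<Sum>y\<in>A. c x y * (\<alpha> x - \<alpha> y) * u y)"
proof -
  define L where "L = infsum (\<lambda>y. c x y * (\<alpha> x - \<alpha> y)) UNIV"
  have 1: "pi_w c x * lap c \<alpha> x = L"
    unfolding lap_def L_def infsum_cmult_right'[symmetric]
    by (rule infsum_cong) (simp add: mult.assoc[symmetric] pi_Ptr[OF c])
  have "pi_w c x * (2 * Gamma2 c \<alpha> u x) = infsum (\<lambda>y. pi_w c x * (Ptr c x y * (\<alpha> x - \<alpha> y) * (u x - u y))) UNIV"
    unfolding Gamma2_def infsum_cmult_right'[symmetric] by simp
  also have "\<dots> = infsum (\<lambda>y. u x * (c x y * (\<alpha> x - \<alpha> y)) - c x y * (\<alpha> x - \<alpha> y) * u y) UNIV"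
    by (rule infsum_cong) (simp only: mult.assoc[symmetric] pi_Ptr[OF c], simp add: algebra_simps)
  also have "\<dots> = infsum (\<lambda>y. u x * (c x y * (\<alpha> x - \<alpha> y))) UNIV - infsum (\<lambda>y. c x y * (\<alpha> x - \<alpha> y) * u y) UNIV"
  proof (rule infsum_diff')
    show "(\<lambda>y. u x * (c x y * (\<alpha> x - \<alpha> y))) summable_on UNIV" using s by (cases "u x = 0") (simp_all add: summable_on_cmult_right)
    show "(\<lambda>y. c x y * (\<alpha> x - \<alpha> y) * u y) summable_on UNIV" by (rule summable_supp[OF A]) (simp add: u)
  qed
  also have "infsum (\<lambda>y. u x * (c x y * (\<alpha> x - \<alpha> y))) UNIV = u x * L"
    unfolding L_def by (rule infsum_cmult_right')
  also have "infsum (\<lambda>y. c x y * (\<alpha> x - \<alpha> y) * u y) UNIV = (\<Sum>y\<in>A. c x y * (\<alpha> x - \<alpha> y) * u y)"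
    by (rule infsum_supp[OF A]) (simp add: u)
  finally have 2: "pi_w c x * (2 * Gamma2 c \<alpha> u x) = u x * L - (\<Sum>y\<in>A. c x y * (\<alpha> x - \<alpha> y) * u y)" .
  have "pi_w c x * (u x * lap c \<alpha> x - 2 * Gamma2 c \<alpha> u x) = u x * (pi_w c x * lap c \<alpha> x) - pi_w c x * (2 * Gamma2 c \<alpha> u x)"
    by (simp add: algebra_simps)
  then show ?thesis using 1 2 by simp
qed


lemma final_ineq:
  fixes lam :: "nat \<Rightarrow> real" and b :: "nat \<Rightarrow> nat \<Rightarrow> real" and k n :: nat
  assumes kn: "k < n" and mono: "\<And>i j. 1 \<le> i \<Longrightarrow> i \<le> j \<Longrightarrow> j \<le> n \<Longrightarrow> lam i \<le> lam j"
    and sym: "\<And>i j. b i j = b j i"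
  shows "(\<Sum>i=1..k. (lam (k+1) - lam i)^2 * (\<Sum>j=1..n. (lam j - lam i) * b i j * b i j))
     \<le> (\<Sum>i=1..k. (lam (k+1) - lam i) * (\<Sum>j=1..n. ((lam j - lam i) * b i j)^2))"
proof -
  define F where "F i j = (lam (k+1) - lam i)^2 * ((lam j - lam i) * b i j * b i j)
      - (lam (k+1) - lam i) * ((lam j - lam i) * b i j)^2" for i j
  have anti: "F i j + F j i = 0" for i j
    unfolding F_def sym[of j i] by (simp add: power2_eq_square algebra_simps)
  define X where "X = (\<Sum>i=1..k. \<Sum>j=1..k. F i j)"
  have "X = (\<Sum>j=1..k. \<Sum>i=1..k. F i j)" unfolding X_def by (rule sum.swap)
  then have "X + X = (\<Sum>i=1..k. \<Sum>j=1..k. F i j) + (\<Sum>i=1..k. \<Sum>j=1..k. F j i)"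
    unfolding X_def by simp
  also have "\<dots> = (\<Sum>i=1..k. \<Sum>j=1..k. F i j + F j i)" by (simp add: sum.distrib)
  also have "\<dots> = 0" by (simp add: anti)
  finally have Z: "X = 0" by simp
  have N: "(\<Sum>i=1..k. \<Sum>j=k+1..n. F i j) \<le> 0"
  proof (intro sum_nonpos)
    fix i j assume i: "i \<in> {1..k}" and j: "j \<in> {k+1..n}"
    define s where "s = lam (k+1) - lam i"
    define d where "d = lam j - lam i"
    have s0: "0 \<le> s" unfolding s_def using mono[of i "k+1"] i kn by auto
    have sd: "s \<le> d" unfolding s_def d_def using mono[of "k+1" j] j by auto
    have "F i j = (s * d * (b i j * b i j)) * (s - d)"
      unfolding F_def s_def[symmetric] d_def[symmetric] by (simp add: power2_eq_square algebra_simps)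
    also have "\<dots> \<le> 0"
      by (rule mult_nonneg_nonpos) (use s0 sd in auto)
    finally show "F i j \<le> 0" .
  qed
  have split: "{1..n} = {1..k} \<union> {k+1..n}" using kn by auto
  have "(\<Sum>i=1..k. (lam (k+1) - lam i)^2 * (\<Sum>j=1..n. (lam j - lam i) * b i j * b i j))
     - (\<Sum>i=1..k. (lam (k+1) - lam i) * (\<Sum>j=1..n. ((lam j - lam i) * b i j)^2))
     = (\<Sum>i=1..k. \<Sum>j=1..n. F i j)"
    unfolding F_def by (simp add: sum_subtractf[symmetric] sum_distrib_left)
  also have "\<dots> = X + (\<Sum>i=1..k. \<Sum>j=k+1..n. F i j)"
    unfolding X_def split by (simp add: sum.union_disjoint sum.distrib)
  finally show ?thesis using Z N by simp
qed

definition ipA :: "('v::countable \<Rightarrow> 'v \<Rightarrow> real) \<Rightarrow> 'v set \<Rightarrow> ('v \<Rightarrow> real) \<Rightarrow> ('v \<Rightarrow> real) \<Rightarrow> real" where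
  "ipA c A g h = (\<Sum>x\<in>A. pi_w c x * g x * h x)"

context
  fixes c :: "'v::countable \<Rightarrow> 'v \<Rightarrow> real" and A :: "'v set" and n :: nat
    and lam :: "nat \<Rightarrow> real" and u :: "nat \<Rightarrow> 'v \<Rightarrow> real" and \<alpha> :: "'v \<Rightarrow> real"
  assumes c: "network c" and fin: "finite A" and card: "card A = n"
    and ds: "dirichlet_system c A lam u"
    and sa: "\<forall>x\<in>A. (\<lambda>y. c x y * (\<alpha> x - \<alpha> y)^2) summable_on UNIV"
begin

lemma supp: "i \<in> {1..n} \<Longrightarrow> x \<notin> A \<Longrightarrow> u i x = 0"
  using ds card unfolding dirichlet_system_def by auto

lemma eig: "i \<in> {1..n} \<Longrightarrow> x \<in> A \<Longrightarrow> lap c (u i) x = lam i * u i x"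
proof -
  assume i: "i \<in> {1..n}" and x: "x \<in> A"
  have "dir_lap c A (u i) = (\<lambda>x. lam i * u i x)" using ds card i unfolding dirichlet_system_def by auto
  then have "dir_lap c A (u i) x = lam i * u i x" by simp
  then show ?thesis using x by (simp add: dir_lap_def)
qed

lemma orth: "i \<in> {1..n} \<Longrightarrow> j \<in> {1..n} \<Longrightarrow> inner_pi c (u i) (u j) = (if i = j then 1 else 0)"
  using ds card unfolding dirichlet_system_def by auto

lemma lam_mono: "1 \<le> i \<Longrightarrow> i \<le> j \<Longrightarrow> j \<le> n \<Longrightarrow> lam i \<le> lam j"
  using ds card unfolding dirichlet_system_def by auto

lemma orth_fin: "i \<in> {1..n} \<Longrightarrow> j \<in> {1..n} \<Longrightarrow> ipA c A (u i) (u j) = (if i = j then 1 else 0)"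
proof -
  assume i: "i \<in> {1..n}" and j: "j \<in> {1..n}"
  have "inner_pi c (u i) (u j) = ipA c A (u i) (u j)"
    unfolding inner_pi_def ipA_def by (rule infsum_supp[OF fin]) (simp add: supp[OF i])
  then show ?thesis using orth[OF i j] by simp
qed

lemma eig_fin: "i \<in> {1..n} \<Longrightarrow> x \<in> A \<Longrightarrow> (\<Sum>y\<in>A. c x y * u i y) = pi_w c x * u i x * (1 - lam i)"
proof -
  assume i: "i \<in> {1..n}" and x: "x \<in> A"
  have "pi_w c x * lap c (u i) x = pi_w c x * u i x - (\<Sum>y\<in>A. c x y * u i y)"
    by (rule lap_fin[OF c fin]) (simp add: supp[OF i])
  then show ?thesis using eig[OF i x] by (simp add: algebra_simps)
qed

lemma completeness:
  assumes x: "x \<in> A" and y: "y \<in> A"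
  shows "(\<Sum>j=1..n. pi_w c x * u j x * u j y) = (if x = y then 1 else 0)"
proof -
  obtain e where e: "bij_betw e {0..<n} A" using ex_bij_betw_nat_finite[OF fin] card by blast
  define M1 :: "real mat" where "M1 = mat n n (\<lambda>(j,a). u (Suc j) (e a))"
  define M2 :: "real mat" where "M2 = mat n n (\<lambda>(a,j). pi_w c (e a) * u (Suc j) (e a))"
  have M1c: "M1 \<in> carrier_mat n n" and M2c: "M2 \<in> carrier_mat n n" by (auto simp: M1_def M2_def)
  have "M1 * M2 = 1\<^sub>m n"
  proof (rule eq_matI)
    fix i j assume i: "i < dim_row (1\<^sub>m n :: real mat)" and j: "j < dim_col (1\<^sub>m n :: real mat)"
    then have i': "i < n" and j': "j < n" by auto
    have "(M1 * M2) $$ (i, j) = (\<Sum>a\<in>{0..<n}. u (Suc i) (e a) * (pi_w c (e a) * u (Suc j) (e a)))"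
      using i' j' by (simp add: M1_def M2_def scalar_prod_def)
    also have "\<dots> = (\<Sum>x\<in>A. u (Suc i) x * (pi_w c x * u (Suc j) x))"
      by (rule sum.reindex_bij_betw[OF e])
    also have "\<dots> = ipA c A (u (Suc i)) (u (Suc j))"
      unfolding ipA_def by (simp add: algebra_simps)
    also have "\<dots> = (if i = j then 1 else 0)" using i' j' by (simp add: orth_fin)
    finally show "(M1 * M2) $$ (i, j) = 1\<^sub>m n $$ (i, j)" using i' j' by simp
  qed (auto simp: M1_def M2_def)
  then have MM: "M2 * M1 = 1\<^sub>m n" by (rule mat_mult_left_right_inverse[OF M1c M2c])
  obtain a where a: "a < n" "e a = x" using e x by (auto simp: bij_betw_def)
  obtain b where b: "b < n" "e b = y" using e y by (auto simp: bij_betw_def)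
  have ab: "x = y \<longleftrightarrow> a = b" using e a b by (auto simp: bij_betw_def inj_on_def)
  have "(M2 * M1) $$ (a, b) = (\<Sum>j\<in>{0..<n}. pi_w c x * u (Suc j) x * u (Suc j) y)"
    using a b by (simp add: M1_def M2_def scalar_prod_def)
  also have "\<dots> = (\<Sum>j=1..n. pi_w c x * u j x * u j y)"
    by (simp only: One_nat_def sum.atLeast1_atMost_eq atLeast0LessThan)
  finally show ?thesis using MM a b ab by simp
qed

lemma parseval: "ipA c A g h = (\<Sum>j=1..n. ipA c A g (u j) * ipA c A h (u j))"
proof -
  have "(\<Sum>j=1..n. ipA c A g (u j) * ipA c A h (u j))
      = (\<Sum>j=1..n. \<Sum>x\<in>A. \<Sum>y\<in>A. (pi_w c x * g x * u j x) * (pi_w c y * h y * u j y))"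
    unfolding ipA_def by (simp add: sum_product)
  also have "\<dots> = (\<Sum>x\<in>A. \<Sum>y\<in>A. \<Sum>j=1..n. (pi_w c x * g x * u j x) * (pi_w c y * h y * u j y))"
    by (subst sum.swap) (rule sum.cong[OF refl], rule sum.swap)
  also have "\<dots> = (\<Sum>x\<in>A. \<Sum>y\<in>A. g x * pi_w c y * h y * (\<Sum>j=1..n. pi_w c x * u j x * u j y))"
    by (simp add: sum_distrib_left algebra_simps)
  also have "\<dots> = (\<Sum>x\<in>A. \<Sum>y\<in>A. g x * pi_w c y * h y * (if x = y then 1 else 0))"
    by (intro sum.cong refl, simp only: completeness)
  also have "\<dots> = (\<Sum>x\<in>A. g x * pi_w c x * h x)"
  proof (rule sum.cong[OF refl])
    fix x assume x: "x \<in> A"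
    have "(\<Sum>y\<in>A. g x * pi_w c y * h y * (if x = y then 1 else 0)) = (\<Sum>y\<in>A. if x = y then g x * pi_w c y * h y else 0)"
      by (rule sum.cong) auto
    also have "\<dots> = g x * pi_w c x * h x" using x fin by (simp add: sum.delta)
    finally show "(\<Sum>y\<in>A. g x * pi_w c y * h y * (if x = y then 1 else 0)) = g x * pi_w c x * h x" .
  qed
  finally show ?thesis unfolding ipA_def by (simp add: algebra_simps)
qed

definition "D i x = (\<Sum>y\<in>A. c x y * (\<alpha> x - \<alpha> y) * u i y)"
definition "w i x = u i x * lap c \<alpha> x - 2 * Gamma2 c \<alpha> (u i) x"
definition "b i j = ipA c A (\<lambda>x. \<alpha> x * u i x) (u j)"

lemma b_sym: "b i j = b j i"
  unfolding b_def ipA_def by (intro sum.cong refl) (simp add: algebra_simps)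

lemma pw: "i \<in> {1..n} \<Longrightarrow> pi_w c x * w i x = D i x"
  unfolding w_def D_def
proof (rule w_fin[OF c fin])
  assume i: "i \<in> {1..n}"
  show "\<And>y. y \<notin> A \<Longrightarrow> u i y = 0" by (rule supp[OF i])
  show "(\<lambda>y. c x y * (\<alpha> x - \<alpha> y)) summable_on UNIV" if "u i x \<noteq> 0"
  proof -
    have "x \<in> A" using that supp[OF i] by blast
    then show ?thesis using sa summ_lin[OF c] by blast
  qed
qed

lemma wu: assumes i: "i \<in> {1..n}" and j: "j \<in> {1..n}"
  shows "ipA c A (w i) (u j) = (lam j - lam i) * b i j"
proof -
  have "ipA c A (w i) (u j) = (\<Sum>x\<in>A. D i x * u j x)"
    unfolding ipA_def using pw[OF i] by simp
  also have "\<dots> = (\<Sum>x\<in>A. \<Sum>y\<in>A. c x y * \<alpha> x * u i y * u j x - c x y * \<alpha> y * u i y * u j x)"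
    unfolding D_def sum_distrib_right by (intro sum.cong refl) (simp add: algebra_simps)
  also have "\<dots> = (\<Sum>x\<in>A. \<Sum>y\<in>A. c x y * \<alpha> x * u i y * u j x) - (\<Sum>x\<in>A. \<Sum>y\<in>A. c x y * \<alpha> y * u i y * u j x)"
    by (simp only: sum_subtractf)
  also have "(\<Sum>x\<in>A. \<Sum>y\<in>A. c x y * \<alpha> x * u i y * u j x) = (\<Sum>x\<in>A. \<alpha> x * u j x * (\<Sum>y\<in>A. c x y * u i y))"
    by (simp add: sum_distrib_left algebra_simps)
  also have "\<dots> = (\<Sum>x\<in>A. \<alpha> x * u j x * (pi_w c x * u i x * (1 - lam i)))"
    by (intro sum.cong refl) (simp add: eig_fin[OF i])
  also have "\<dots> = (1 - lam i) * b i j"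
    unfolding b_def ipA_def by (simp add: sum_distrib_left algebra_simps)
  also have "(\<Sum>x\<in>A. \<Sum>y\<in>A. c x y * \<alpha> y * u i y * u j x) = (\<Sum>y\<in>A. \<Sum>x\<in>A. c y x * \<alpha> y * u i y * u j x)"
    by (subst sum.swap) (simp add: net_sym[OF c, of _ "_::'v"])
  also have "\<dots> = (\<Sum>y\<in>A. \<alpha> y * u i y * (\<Sum>x\<in>A. c y x * u j x))"
    by (simp add: sum_distrib_left algebra_simps)
  also have "\<dots> = (\<Sum>y\<in>A. \<alpha> y * u i y * (pi_w c y * u j y * (1 - lam j)))"
    by (intro sum.cong refl) (simp add: eig_fin[OF j])
  also have "\<dots> = (1 - lam j) * b i j"
    unfolding b_def ipA_def by (simp add: sum_distrib_left algebra_simps)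
  finally show ?thesis by (simp add: algebra_simps)
qed

lemma bij_swap_UNIV: "bij_betw prod.swap (UNIV :: ('a \<times> 'b) set) UNIV"
  by (rule bij_betwI[where g=prod.swap]) auto

lemma lhs_eq: assumes i: "i \<in> {1..n}"
  shows "inner_pi c (Gamma2 c \<alpha> \<alpha>) (\<lambda>x. (u i x)^2) - Lambda c \<alpha> (u i) = ipA c A (w i) (\<lambda>x. \<alpha> x * u i x)"
proof -
  define U where "U = u i"
  have U0: "\<And>x. x \<notin> A \<Longrightarrow> U x = 0" unfolding U_def using supp[OF i] by blast
  have U0': "\<And>x. U x \<noteq> 0 \<Longrightarrow> x \<in> A" using U0 by blast
  define T where "T x = infsum (\<lambda>y. c x y * (\<alpha> x - \<alpha> y)^2) UNIV" for x
  define P where "P x y = c x y * (\<alpha> x - \<alpha> y)^2 * (U x)^2" for x y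
  define Q where "Q x y = c x y * (\<alpha> x - \<alpha> y)^2 * U x * U y" for x y
  define Qs where "Qs = (\<Sum>x\<in>A. \<Sum>y\<in>A. Q x y)"
  have pG: "pi_w c x * Gamma2 c \<alpha> \<alpha> x = 1/2 * T x" for x
  proof -
    have "pi_w c x * Gamma2 c \<alpha> \<alpha> x = 1/2 * (pi_w c x * infsum (\<lambda>y. Ptr c x y * (\<alpha> x - \<alpha> y) * (\<alpha> x - \<alpha> y)) UNIV)"
      unfolding Gamma2_def by simp
    also have "pi_w c x * infsum (\<lambda>y. Ptr c x y * (\<alpha> x - \<alpha> y) * (\<alpha> x - \<alpha> y)) UNIV
        = infsum (\<lambda>y. pi_w c x * (Ptr c x y * (\<alpha> x - \<alpha> y) * (\<alpha> x - \<alpha> y))) UNIV"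
      by (rule infsum_cmult_right'[symmetric])
    also have "\<dots> = T x" unfolding T_def
      by (rule infsum_cong) (simp only: mult.assoc[symmetric] pi_Ptr[OF c], simp add: power2_eq_square)
    finally show ?thesis .
  qed
  have inner1: "inner_pi c (Gamma2 c \<alpha> \<alpha>) (\<lambda>x. (u i x)^2) = 1/2 * (\<Sum>x\<in>A. (U x)^2 * T x)"
  proof -
    have "inner_pi c (Gamma2 c \<alpha> \<alpha>) (\<lambda>x. (u i x)^2) = (\<Sum>x\<in>A. pi_w c x * Gamma2 c \<alpha> \<alpha> x * (U x)^2)"
      unfolding inner_pi_def U_def by (rule infsum_supp[OF fin]) (simp add: supp[OF i])
    also have "\<dots> = (\<Sum>x\<in>A. 1/2 * ((U x)^2 * T x))" by (intro sum.cong refl) (simp add: pG mult_ac)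
    finally show ?thesis by (simp only: sum_distrib_left)
  qed
  have PA: "(\<lambda>y. P x y) summable_on UNIV" if x: "x \<in> A" for x
  proof -
    have "(\<lambda>y. (U x)^2 * (c x y * (\<alpha> x - \<alpha> y)^2)) summable_on UNIV"
      by (rule summable_on_cmult_right) (use sa x in blast)
    then show ?thesis unfolding P_def by (simp add: algebra_simps)
  qed
  have sPA: "(\<lambda>(x,y). P x y) summable_on (A \<times> UNIV)"
  proof -
    have "(\<lambda>z. norm ((\<lambda>(x,y). P x y) z)) summable_on (Sigma A (\<lambda>_. UNIV))"
      unfolding Infinite_Sum.abs_summable_on_Sigma_iff
      apply (intro conjI ballI)
      subgoal for x using PA[of x] summable_on_iff_abs_summable_on_real[of "P x"] by simp
      subgoal using fin by simp
      done
    then show ?thesis using summable_on_iff_abs_summable_on_real by blast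
  qed
  have sP: "(\<lambda>(x,y). P x y) summable_on UNIV"
  proof -
    have "(\<lambda>(x,y). P x y) summable_on UNIV \<longleftrightarrow> (\<lambda>(x,y). P x y) summable_on (A \<times> UNIV)"
      by (rule summable_on_cong_neutral) (auto simp: P_def dest: U0')
    then show ?thesis using sPA by simp
  qed
  have iP: "infsum (\<lambda>(x,y). P x y) UNIV = (\<Sum>x\<in>A. (U x)^2 * T x)"
  proof -
    have "infsum (\<lambda>(x,y). P x y) UNIV = infsum (\<lambda>(x,y). P x y) (A \<times> UNIV)"
      by (rule infsum_cong_neutral) (auto simp: P_def dest: U0')
    also have "\<dots> = infsum (\<lambda>x. infsum (P x) UNIV) A"
      by (rule infsum_Sigma'_banach[symmetric]) (use sPA in simp)
    also have "\<dots> = (\<Sum>x\<in>A. infsum (P x) UNIV)" using fin by simp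
    also have "\<dots> = (\<Sum>x\<in>A. (U x)^2 * T x)"
    proof (rule sum.cong[OF refl])
      fix x
      have "infsum (P x) UNIV = infsum (\<lambda>y. (U x)^2 * (c x y * (\<alpha> x - \<alpha> y)^2)) UNIV"
        unfolding P_def by (rule infsum_cong) (simp add: algebra_simps)
      then show "infsum (P x) UNIV = (U x)^2 * T x" unfolding T_def by (simp add: infsum_cmult_right')
    qed
    finally show ?thesis .
  qed
  have swapeq: "(\<lambda>(x,y). P y x) = (\<lambda>z. (\<lambda>(x,y). P x y) (prod.swap z))" by auto
  have sP': "(\<lambda>(x,y). P y x) summable_on UNIV"
    unfolding swapeq using sP summable_on_reindex_bij_betw[OF bij_swap_UNIV] by blast
  have iP': "infsum (\<lambda>(x,y). P y x) UNIV = infsum (\<lambda>(x,y). P x y) UNIV"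
    unfolding swapeq by (rule infsum_reindex_bij_betw[OF bij_swap_UNIV])
  have sQ: "(\<lambda>(x,y). Q x y) summable_on UNIV"
    by (rule summable_supp[of "A \<times> A"]) (auto simp: fin Q_def dest: U0')
  have iQ: "infsum (\<lambda>(x,y). Q x y) UNIV = Qs"
  proof -
    have "infsum (\<lambda>(x,y). Q x y) UNIV = sum (\<lambda>(x,y). Q x y) (A \<times> A)"
      by (rule infsum_supp) (auto simp: fin Q_def dest: U0')
    then show ?thesis unfolding Qs_def by (simp add: sum.cartesian_product)
  qed
  have hfun: "(\<lambda>(x,y). c x y * \<bar>\<alpha> x - \<alpha> y\<bar>^2 * \<bar>U x - U y\<bar>^2)
      = (\<lambda>z. ((\<lambda>(x,y). P x y) z + (\<lambda>(x,y). P y x) z) - 2 * (\<lambda>(x,y). Q x y) z)"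
  proof (rule ext, clarify)
    fix x y
    have cs: "c y x = c x y" using net_sym[OF c, of y x] .
    show "c x y * \<bar>\<alpha> x - \<alpha> y\<bar>^2 * \<bar>U x - U y\<bar>^2 = P x y + P y x - 2 * Q x y"
      unfolding P_def Q_def cs by (simp add: power2_eq_square algebra_simps)
  qed
  have Lam: "Lambda c \<alpha> (u i) = 1/4 * (2 * (\<Sum>x\<in>A. (U x)^2 * T x) - 2 * Qs)"
  proof -
    have "Lambda c \<alpha> (u i) = 1/4 * infsum (\<lambda>z. ((\<lambda>(x,y). P x y) z + (\<lambda>(x,y). P y x) z) - 2 * (\<lambda>(x,y). Q x y) z) UNIV"
      unfolding Lambda_def U_def[symmetric] hfun ..
    also have "infsum (\<lambda>z. ((\<lambda>(x,y). P x y) z + (\<lambda>(x,y). P y x) z) - 2 * (\<lambda>(x,y). Q x y) z) UNIV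
       = infsum (\<lambda>z. (\<lambda>(x,y). P x y) z + (\<lambda>(x,y). P y x) z) UNIV - infsum (\<lambda>z. 2 * (\<lambda>(x,y). Q x y) z) UNIV"
      by (rule infsum_diff') (auto intro: summable_on_add[OF sP sP'] summable_on_cmult_right[OF sQ])
    also have "infsum (\<lambda>z. (\<lambda>(x,y). P x y) z + (\<lambda>(x,y). P y x) z) UNIV = 2 * (\<Sum>x\<in>A. (U x)^2 * T x)"
      by (subst infsum_add[OF sP sP']) (simp add: iP' iP)
    also have "infsum (\<lambda>z. 2 * (\<lambda>(x,y). Q x y) z) UNIV = 2 * Qs"
      by (simp add: infsum_cmult_right' iQ)
    finally show ?thesis .
  qed
  have rhs: "ipA c A (w i) (\<lambda>x. \<alpha> x * u i x) = Qs / 2"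
  proof -
    define G where "G = (\<Sum>x\<in>A. \<Sum>y\<in>A. c x y * (\<alpha> x - \<alpha> y) * \<alpha> x * U x * U y)"
    have "ipA c A (w i) (\<lambda>x. \<alpha> x * u i x) = (\<Sum>x\<in>A. D i x * (\<alpha> x * U x))"
      unfolding ipA_def U_def using pw[OF i] by simp
    also have "\<dots> = G" unfolding D_def G_def U_def sum_distrib_right
      by (intro sum.cong refl) (simp add: algebra_simps)
    finally have 1: "ipA c A (w i) (\<lambda>x. \<alpha> x * u i x) = G" .
    have "Qs = (\<Sum>x\<in>A. \<Sum>y\<in>A. c x y * (\<alpha> x - \<alpha> y) * \<alpha> x * U x * U y - c x y * (\<alpha> x - \<alpha> y) * \<alpha> y * U x * U y)"
      unfolding Qs_def Q_def by (intro sum.cong refl) (simp add: power2_eq_square algebra_simps)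
    also have "\<dots> = G - (\<Sum>x\<in>A. \<Sum>y\<in>A. c x y * (\<alpha> x - \<alpha> y) * \<alpha> y * U x * U y)"
      unfolding G_def by (simp only: sum_subtractf)
    also have "(\<Sum>x\<in>A. \<Sum>y\<in>A. c x y * (\<alpha> x - \<alpha> y) * \<alpha> y * U x * U y)
        = (\<Sum>y\<in>A. \<Sum>x\<in>A. c x y * (\<alpha> x - \<alpha> y) * \<alpha> y * U x * U y)"
      by (rule sum.swap)
    also have "\<dots> = - G" unfolding G_def sum_negf[symmetric]
      by (intro sum.cong refl) (simp add: net_sym[OF c, of _ "_::'v"] algebra_simps)
    finally show ?thesis using 1 by simp
  qed
  show ?thesis using inner1 Lam rhs by simp
qed

lemma rhs_bound: assumes i: "i \<in> {1..n}"
  shows "ipA c A (w i) (w i) \<le> norm_pi_sq c (w i)"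
proof -
  define U where "U = u i"
  define Rb where "Rb x = real n * (\<Sum>y\<in>A. c x y * (\<alpha> x - \<alpha> y)^2 * (U y)^2)" for x
  have Rb_nn: "0 \<le> Rb x" for x
    unfolding Rb_def by (intro mult_nonneg_nonneg sum_nonneg) (auto simp: net_nonneg[OF c])
  have sRb: "Rb summable_on UNIV"
  proof -
    have "(\<lambda>x. \<Sum>y\<in>A. (U y)^2 * (c y x * (\<alpha> y - \<alpha> x)^2)) summable_on UNIV"
      by (rule summable_fin_sum[OF fin], rule summable_on_cmult_right) (use sa in blast)
    moreover have "(\<lambda>x. \<Sum>y\<in>A. (U y)^2 * (c y x * (\<alpha> y - \<alpha> x)^2)) = (\<lambda>x. \<Sum>y\<in>A. c x y * (\<alpha> x - \<alpha> y)^2 * (U y)^2)"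
      by (intro ext sum.cong refl) (simp add: net_sym[OF c, of _ "_::'v"] power2_commute)
    ultimately have "(\<lambda>x. \<Sum>y\<in>A. c x y * (\<alpha> x - \<alpha> y)^2 * (U y)^2) summable_on UNIV" by simp
    then show ?thesis unfolding Rb_def by (rule summable_on_cmult_right)
  qed
  have nn: "0 \<le> pi_w c x * w i x * w i x" for x
    using pi_nonneg[OF c, of x] by (simp add: mult.assoc)
  have bnd: "pi_w c x * w i x * w i x \<le> Rb x" for x
  proof (cases "pi_w c x = 0")
    case True then show ?thesis using Rb_nn by simp
  next
    case False
    define p where "p = pi_w c x"
    have p: "0 < p" using False pi_nonneg[OF c, of x] unfolding p_def by simp
    define S' where "S' = (\<Sum>y\<in>A. c x y * (\<alpha> x - \<alpha> y)^2 * (U y)^2)"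
    have Dx: "D i x = p * w i x" using pw[OF i] unfolding p_def by simp
    have "(D i x)^2 \<le> (\<Sum>y\<in>A. (c x y * (\<alpha> x - \<alpha> y) * U y)^2) * card A"
      unfolding D_def U_def by (rule sum_squared_le_sum_of_squares)
    also have "(\<Sum>y\<in>A. (c x y * (\<alpha> x - \<alpha> y) * U y)^2) \<le> (\<Sum>y\<in>A. p * (c x y * (\<alpha> x - \<alpha> y)^2 * (U y)^2))"
    proof (rule sum_mono)
      fix y
      have "(c x y * (\<alpha> x - \<alpha> y) * U y)^2 = c x y * (c x y * (\<alpha> x - \<alpha> y)^2 * (U y)^2)"
        by (simp add: power2_eq_square algebra_simps)
      also have "\<dots> \<le> p * (c x y * (\<alpha> x - \<alpha> y)^2 * (U y)^2)"
        by (rule mult_right_mono) (auto simp: p_def c_le_pi[OF c] net_nonneg[OF c])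
      finally show "(c x y * (\<alpha> x - \<alpha> y) * U y)^2 \<le> p * (c x y * (\<alpha> x - \<alpha> y)^2 * (U y)^2)" .
    qed
    finally have "(D i x)^2 \<le> (p * S') * real n"
      unfolding S'_def sum_distrib_left[symmetric] using card by (simp add: mult_right_mono)
    then have "(p * w i x)^2 \<le> p * (real n * S')" using Dx by (simp add: mult_ac)
    then have "(p * w i x)^2 / p \<le> real n * S'" using p
      by (simp add: divide_le_eq mult.commute)
    moreover have "(p * w i x)^2 / p = pi_w c x * w i x * w i x"
      using p unfolding p_def by (simp add: power2_eq_square)
    ultimately show ?thesis unfolding Rb_def S'_def by simp
  qed
  have sg: "(\<lambda>x. pi_w c x * w i x * w i x) summable_on UNIV"
    by (rule summable_on_comparison_test[OF sRb]) (use bnd nn in auto)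
  have "ipA c A (w i) (w i) = infsum (\<lambda>x. pi_w c x * w i x * w i x) A"
    unfolding ipA_def using fin by simp
  also have "\<dots> \<le> infsum (\<lambda>x. pi_w c x * w i x * w i x) UNIV"
    by (rule infsum_mono_neutral) (use fin sg nn in auto)
  finally show ?thesis unfolding norm_pi_sq_def inner_pi_def .
qed

lemma main_terms: assumes i: "i \<in> {1..n}"
  shows "inner_pi c (Gamma2 c \<alpha> \<alpha>) (\<lambda>x. (u i x)^2) - Lambda c \<alpha> (u i) = (\<Sum>j=1..n. (lam j - lam i) * b i j * b i j)"
    and "(\<Sum>j=1..n. ((lam j - lam i) * b i j)^2) \<le> norm_pi_sq c (\<lambda>x. u i x * lap c \<alpha> x - 2 * Gamma2 c \<alpha> (u i) x)"
proof -
  show "inner_pi c (Gamma2 c \<alpha> \<alpha>) (\<lambda>x. (u i x)^2) - Lambda c \<alpha> (u i) = (\<Sum>j=1..n. (lam j - lam i) * b i j * b i j)"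
    unfolding lhs_eq[OF i] by (subst parseval, intro sum.cong refl) (simp add: wu[OF i] b_def)
  have "(\<Sum>j=1..n. ((lam j - lam i) * b i j)^2) = ipA c A (w i) (w i)"
    by (subst parseval, intro sum.cong refl) (simp add: wu[OF i] power2_eq_square)
  also have "\<dots> \<le> norm_pi_sq c (w i)" by (rule rhs_bound[OF i])
  finally show "(\<Sum>j=1..n. ((lam j - lam i) * b i j)^2) \<le> norm_pi_sq c (\<lambda>x. u i x * lap c \<alpha> x - 2 * Gamma2 c \<alpha> (u i) x)"
    unfolding w_def .
qed

lemma goal_ctx: assumes kn: "k < n"
  shows "(\<Sum>i=1..k. (lam (k+1) - lam i)^2 *
            (inner_pi c (Gamma2 c \<alpha> \<alpha>) (\<lambda>x. (u i x)^2) - Lambda c \<alpha> (u i)))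
         \<le> (\<Sum>i=1..k. (lam (k+1) - lam i) *
            norm_pi_sq c (\<lambda>x. u i x * lap c \<alpha> x - 2 * Gamma2 c \<alpha> (u i) x))"
proof -
  have iin: "i \<in> {1..n}" if "i \<in> {1..k}" for i using that kn by auto
  have "(\<Sum>i=1..k. (lam (k+1) - lam i)^2 *
            (inner_pi c (Gamma2 c \<alpha> \<alpha>) (\<lambda>x. (u i x)^2) - Lambda c \<alpha> (u i)))
      = (\<Sum>i=1..k. (lam (k+1) - lam i)^2 * (\<Sum>j=1..n. (lam j - lam i) * b i j * b i j))"
    by (intro sum.cong refl) (simp add: main_terms(1)[OF iin])
  also have "\<dots> \<le> (\<Sum>i=1..k. (lam (k+1) - lam i) * (\<Sum>j=1..n. ((lam j - lam i) * b i j)^2))"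
    by (rule final_ineq[OF kn]) (auto intro: lam_mono b_sym)
  also have "\<dots> \<le> (\<Sum>i=1..k. (lam (k+1) - lam i) *
            norm_pi_sq c (\<lambda>x. u i x * lap c \<alpha> x - 2 * Gamma2 c \<alpha> (u i) x))"
  proof (rule sum_mono)
    fix i assume i: "i \<in> {1..k}"
    have "0 \<le> lam (k+1) - lam i" using lam_mono[of i "k+1"] i kn by auto
    then show "(lam (k+1) - lam i) * (\<Sum>j=1..n. ((lam j - lam i) * b i j)^2)
        \<le> (lam (k+1) - lam i) * norm_pi_sq c (\<lambda>x. u i x * lap c \<alpha> x - 2 * Gamma2 c \<alpha> (u i) x)"
      by (rule mult_left_mono[OF main_terms(2)[OF iin[OF i]]])
  qed
  finally show ?thesis .
qed

end

theorem lemma3p1: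
  fixes c :: "'v::countable \<Rightarrow> 'v \<Rightarrow> real" and \<Omega> :: "'v set" and n k :: nat
    and lam :: "nat \<Rightarrow> real" and u :: "nat \<Rightarrow> 'v \<Rightarrow> real" and \<alpha> :: "'v \<Rightarrow> real"
  assumes "network c" and "finite \<Omega>" and "card \<Omega> = n"
    and "dirichlet_system c \<Omega> lam u"
    and "k < n"
    and "\<forall>x\<in>\<Omega>. (\<lambda>y. c x y * (\<alpha> x - \<alpha> y)^2) summable_on UNIV"
  shows "(\<Sum>i=1..k. (lam (k+1) - lam i)^2 *
            (inner_pi c (Gamma2 c \<alpha> \<alpha>) (\<lambda>x. (u i x)^2) - Lambda c \<alpha> (u i)))
         \<le> (\<Sum>i=1..k. (lam (k+1) - lam i) *
            norm_pi_sq c (\<lambda>x. u i x * lap c \<alpha> x - 2 * Gamma2 c \<alpha> (u i) x))"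
  by (rule goal_ctx[OF assms(1-4) assms(6) assms(5)])

end
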